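(* In the primal semi-discrete setting below, let $F(t)\in V^1$ be any flux depending continuously on $t$, let $Q=qF$ with $q$ the discrete potential vorticity, let $u,D$ satisfy (M) and (C) with these $F,Q$, and assume $D>0$ on $\Omega$ for all times. If $q(0)$ is a constant function $c$ on $\Omega$, then $q(t)=c$ for all times $t$.
   Context: Primal setting. Let $\Omega$ be a smooth closed (compact, without boundary) oriented two-dimensional Riemannian surface (e.g. the sphere) with area form $dS$ and unit normal $\hat k$. For a tangent vector field $u$ let $u^\perp=\hat k\times u$; $\nabla$ and $\nabla\cdot$ denote the surface gradient and divergence, and $\nabla^\perp\gamma=\hat k\times\nabla\gamma$. $\Omega$ is divided into a mesh of elements $e$ with edges. Let $V^0\subset H^1(\Omega)$ be a finite-dimensional space of continuous piecewise polynomial functions containing the constants; $V^1\subset H(\mathrm{div},\Omega)$ a finite-dimensional space of piecewise polynomial tangent vector fields with continuous normal components across element edges; $V^2\subset L^2(\Omega)$ a finite-dimensional space of (discontinuous) piecewise polynomial functions containing the indicator function $\mathbf 1_e$ of every element; and assume $\nabla^\perp V^0\subset V^1$ and $\nabla\cdot V^1\subset V^2$. Fix a constant $g>0$, a time-independent Coriolis parameter $f\in L^\infty(\Omega)$ and a bottom topography $b\in V^2$. The unknowns are $u(t)\in V^1$, $D(t)\in V^2$, continuously differentiable in $t$ on a time interval, coupled to a mass flux $F(t)\in V^1$ and a potential-vorticity flux $Q(t)$ (a square-integrable tangent vector field), specified case by case, via (M) $\frac{d}{dt}\int_\Omega w\cdot u\,dS+\int_\Omega w\cdot Q^\perp\,dS-\int_\Omega(\nabla\cdot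 w)\big(g(D+b)+\tfrac12|u|^2\big)dS=0$ for all $w\in V^1$; (C) $\frac{d}{dt}\int_\Omega\phi D\,dS+\int_\Omega\phi\,\nabla\cdot F\,dS=0$ for all $\phi\in V^2$. The discrete vorticity $\zeta(t)\in V^0$ is defined by $\int_\Omega\gamma\zeta\,dS=-\int_\Omega\nabla^\perp\gamma\cdot u\,dS$ for all $\gamma\in V^0$. When $D>0$, the discrete potential vorticity $q(t)\in V^0$ is defined by $\int_\Omega\gamma qD\,dS=\int_\Omega\gamma(\zeta+f)\,dS$ for all $\gamma\in V^0$. The energy-conserving mass flux is the $F(t)\in V^1$ with $\int_\Omega w\cdot F\,dS=\int_\Omega w\cdot(Du)\,dS$ for all $w\in V^1$. *)

theory Defs
  imports "HOL-Analysis.Analysis"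
begin

definition fd_span :: "('p \<Rightarrow> 'a::real_vector) set \<Rightarrow> ('p \<Rightarrow> 'a) set" where
  "fd_span B = {(\<lambda>x. \<Sum>b\<in>B. c b *\<^sub>R b x) | c. True}"

definition finite_dim_fun_space :: "('p \<Rightarrow> 'a::real_vector) set \<Rightarrow> bool" where
  "finite_dim_fun_space V \<longleftrightarrow> (\<exists>B. finite B \<and> V = fd_span B)"

definition perp :: "('p \<Rightarrow> real^3) \<Rightarrow> ('p \<Rightarrow> real^3) \<Rightarrow> ('p \<Rightarrow> real^3)" where
  "perp khat w = (\<lambda>x. cross3 (khat x) (w x))"

text \<open>Bounded Borel-measurable fields on the surface (piecewise polynomials are such).\<close>
definition bdd_meas :: "'p measure \<Rightarrow> ('p \<Rightarrow> 'a::{real_normed_vector, second_countable_topology}) \<Rightarrow> bool" where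
  "bdd_meas M h \<longleftrightarrow> h \<in> borel_measurable M \<and> bounded (range h)"

text \<open>The closed oriented surface Omega is the whole type 'p,
  a compact topological space carrying the (finite) area measure M, which charges
  every nonempty open set.  Tangent vectors at x are the vectors of R^3 orthogonal
  to the unit normal khat x.  grad (surface gradient) and sdiv (surface divergence)
  are the differential operators of the surface, of which we record the facts of
  surface calculus relevant to the discrete spaces: tangency of gradients,
  linearity, the Green formula on a closed surface and sdiv (grad-perp) = 0.
  E is the mesh: finitely many measurable elements covering Omega with
  pairwise null overlaps.\<close>
definition primal_setting ::
  "'p::topological_space measure \<Rightarrow> ('p \<Rightarrow> real^3) \<Rightarrow> 'p set set
   \<Rightarrow> (('p \<Rightarrow> real) \<Rightarrow> ('p \<Rightarrow> real^3)) \<Rightarrow> (('p \<Rightarrow> real^3) \<Rightarrow> ('p \<Rightarrow> real))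
   \<Rightarrow> ('p \<Rightarrow> real) set \<Rightarrow> ('p \<Rightarrow> real^3) set \<Rightarrow> ('p \<Rightarrow> real) set \<Rightarrow> bool" where
  "primal_setting M khat E grad sdiv V0 V1 V2 \<longleftrightarrow>
     \<comment> \<open>the surface and its area measure\<close>
     compact (UNIV :: 'p set) \<and> finite_measure M \<and> space M = UNIV \<and> sets M = sets borel \<and>
     (\<forall>U. open U \<and> U \<noteq> {} \<longrightarrow> emeasure M U > 0) \<and>
     \<comment> \<open>unit normal\<close>
     khat \<in> borel_measurable M \<and> (\<forall>x. norm (khat x) = 1) \<and>
     \<comment> \<open>mesh\<close>
     finite E \<and> (\<forall>e\<in>E. e \<in> sets M) \<and> \<Union>E = UNIV \<and>
     (\<forall>e\<in>E. \<forall>e'\<in>E. e \<noteq> e' \<longrightarrow> emeasure M (e \<inter> e') = 0) \<and>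
     \<comment> \<open>the discrete spaces\<close>
     finite_dim_fun_space V0 \<and> finite_dim_fun_space V1 \<and> finite_dim_fun_space V2 \<and>
     (\<forall>\<gamma>\<in>V0. continuous_on UNIV \<gamma> \<and> bdd_meas M \<gamma>) \<and>
     (\<forall>w\<in>V1. bdd_meas M w \<and> (\<forall>x. w x \<bullet> khat x = 0)) \<and>
     (\<forall>\<phi>\<in>V2. bdd_meas M \<phi>) \<and>
     (\<forall>c::real. (\<lambda>_. c) \<in> V0) \<and>
     (\<forall>e\<in>E. indicator e \<in> V2) \<and>
     (\<forall>\<gamma>\<in>V0. perp khat (grad \<gamma>) \<in> V1) \<and>
     (\<forall>w\<in>V1. sdiv w \<in> V2) \<and>
     \<comment> \<open>surface calculus\<close>
     (\<forall>\<gamma>\<in>V0. \<forall>x. grad \<gamma> x \<bullet> khat x = 0) \<and>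
     (\<forall>\<gamma>1\<in>V0. \<forall>\<gamma>2\<in>V0. \<forall>a b.
        grad (\<lambda>x. a * \<gamma>1 x + b * \<gamma>2 x) = (\<lambda>x. a *\<^sub>R grad \<gamma>1 x + b *\<^sub>R grad \<gamma>2 x)) \<and>
     (\<forall>w1\<in>V1. \<forall>w2\<in>V1. \<forall>a b.
        sdiv (\<lambda>x. a *\<^sub>R w1 x + b *\<^sub>R w2 x) = (\<lambda>x. a * sdiv w1 x + b * sdiv w2 x)) \<and>
     (\<forall>\<gamma>\<in>V0. \<forall>w\<in>V1. (LINT x|M. \<gamma> x * sdiv w x) = - (LINT x|M. grad \<gamma> x \<bullet> w x)) \<and>
     (\<forall>\<gamma>\<in>V0. AE x in M. sdiv (perp khat (grad \<gamma>)) x = 0)"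

text \<open>Continuous differentiability in time of a V-valued trajectory, tested
  against the finite-dimensional space (equivalent to C^1 of the coefficients).\<close>
definition weak_C1 :: "'p measure \<Rightarrow> real set \<Rightarrow> ('p \<Rightarrow> 'a::{real_inner, second_countable_topology}) set
    \<Rightarrow> (real \<Rightarrow> 'p \<Rightarrow> 'a) \<Rightarrow> bool" where
  "weak_C1 M I V u \<longleftrightarrow> (\<forall>w\<in>V. \<exists>d. continuous_on I d \<and>
      (\<forall>t\<in>I. ((\<lambda>s. LINT x|M. w x \<bullet> u s x) has_real_derivative d t) (at t within I)))"

definition weak_cont :: "'p measure \<Rightarrow> real set \<Rightarrow> ('p \<Rightarrow> 'a::{real_inner, second_countable_topology}) set
    \<Rightarrow> (real \<Rightarrow> 'p \<Rightarrow> 'a) \<Rightarrow> bool" where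
  "weak_cont M I V u \<longleftrightarrow> (\<forall>w\<in>V. continuous_on I (\<lambda>s. LINT x|M. w x \<bullet> u s x))"

end

theory Submission
  imports Defs
begin


lemma cross_ip: "(cross3 k a) \<bullet> (cross3 k b) = (k \<bullet> k) * (a \<bullet> b) - (k \<bullet> a) * (k \<bullet> b)" for k a b :: "real^3"
  by (simp add: cross3_def inner_vec_def sum_3 vector_def) (simp add: algebra_simps)
lemma cross_cross: "cross3 (cross3 k a) k = (k \<bullet> k) *\<^sub>R a - (a \<bullet> k) *\<^sub>R k" for k a :: "real^3"
  by (simp add: cross3_def inner_vec_def sum_3 vector_def vec_eq_iff forall_3) (simp add: algebra_simps)
lemma norm_cross_le: "norm (cross3 a b) \<le> norm a * norm b" for a b :: "real^3"
proof -
  have "(norm (cross3 a b))\<^sup>2 \<le> (norm a * norm b)\<^sup>2" using norm_cross_dot[of a b] zero_le_power2[of "a \<bullet> b"]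
    by linarith
  then show ?thesis by (rule power2_le_imp_le) simp
qed

lemma bdd_meas_iff: "bdd_meas M h \<longleftrightarrow> h \<in> borel_measurable M \<and> (\<exists>B. \<forall>x. norm (h x) \<le> B)"
  unfolding bdd_meas_def bounded_iff by auto

lemma bdd_meas_I: "h \<in> borel_measurable M \<Longrightarrow> (\<And>x. norm (h x) \<le> B) \<Longrightarrow> bdd_meas M h"
  unfolding bdd_meas_iff by blast

lemma bdd_meas_E:
  assumes "bdd_meas M h" obtains B where "h \<in> borel_measurable M" "\<And>x. norm (h x) \<le> B"
  using assms unfolding bdd_meas_iff by blast

lemma bdd_integrable: fixes h :: "'p \<Rightarrow> 'a::{banach,second_countable_topology}"
  assumes "finite_measure M" "bdd_meas M h" shows "integrable M h"
proof -
  obtain B where "h \<in> borel_measurable M" "\<And>x. norm (h x) \<le> B" using assms(2) by (elim bdd_meas_E) blast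
  then show ?thesis using finite_measure.integrable_const_bound[OF assms(1), of h B] by blast
qed

lemma bdd_const: "bdd_meas M (\<lambda>x. c)"
  by (rule bdd_meas_I[of _ _ "norm c"]) auto

lemma bdd_mult:
  fixes f g :: "'p \<Rightarrow> real"
  assumes "bdd_meas M f" "bdd_meas M g" shows "bdd_meas M (\<lambda>x. f x * g x)"
proof -
  obtain A where A: "f \<in> borel_measurable M" "\<And>x. norm (f x) \<le> A" using assms(1) by (elim bdd_meas_E) blast
  obtain B where B: "g \<in> borel_measurable M" "\<And>x. norm (g x) \<le> B" using assms(2) by (elim bdd_meas_E) blast
  show ?thesis
  proof (rule bdd_meas_I)
    show "(\<lambda>x. f x * g x) \<in> borel_measurable M" using A(1) B(1) by (rule borel_measurable_times)
    fix x
    have "norm (f x * g x) = norm (f x) * norm (g x)" by (simp add: abs_mult)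
    also have "\<dots> \<le> A * B" using A(2)[of x] B(2)[of x] by (intro mult_mono) (auto intro: order.trans[OF norm_ge_zero])
    finally show "norm (f x * g x) \<le> A * B" .
  qed
qed

lemma bdd_scaleR:
  fixes f :: "'p \<Rightarrow> real" and g :: "'p \<Rightarrow> 'a::{real_normed_vector,second_countable_topology}"
  assumes "bdd_meas M f" "bdd_meas M g" shows "bdd_meas M (\<lambda>x. f x *\<^sub>R g x)"
proof -
  obtain A where A: "f \<in> borel_measurable M" "\<And>x. norm (f x) \<le> A" using assms(1) by (elim bdd_meas_E) blast
  obtain B where B: "g \<in> borel_measurable M" "\<And>x. norm (g x) \<le> B" using assms(2) by (elim bdd_meas_E) blast
  show ?thesis
  proof (rule bdd_meas_I)
    show "(\<lambda>x. f x *\<^sub>R g x) \<in> borel_measurable M" using A(1) B(1) by (rule borel_measurable_scaleR)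
    fix x
    have "norm (f x *\<^sub>R g x) = norm (f x) * norm (g x)" by simp
    also have "\<dots> \<le> A * B" using A(2)[of x] B(2)[of x] by (intro mult_mono) (auto intro: order.trans[OF norm_ge_zero])
    finally show "norm (f x *\<^sub>R g x) \<le> A * B" .
  qed
qed

lemma bdd_inner:
  fixes f g :: "'p \<Rightarrow> 'a::{real_inner,second_countable_topology}"
  assumes "bdd_meas M f" "bdd_meas M g" shows "bdd_meas M (\<lambda>x. f x \<bullet> g x)"
proof -
  obtain A where A: "f \<in> borel_measurable M" "\<And>x. norm (f x) \<le> A" using assms(1) by (elim bdd_meas_E) blast
  obtain B where B: "g \<in> borel_measurable M" "\<And>x. norm (g x) \<le> B" using assms(2) by (elim bdd_meas_E) blast
  show ?thesis
  proof (rule bdd_meas_I)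
    show "(\<lambda>x. f x \<bullet> g x) \<in> borel_measurable M" using A(1) B(1) by (rule borel_measurable_inner)
    fix x
    have "norm (f x \<bullet> g x) \<le> norm (f x) * norm (g x)" using Cauchy_Schwarz_ineq2 by simp
    also have "\<dots> \<le> A * B" using A(2)[of x] B(2)[of x] by (intro mult_mono) (auto intro: order.trans[OF norm_ge_zero])
    finally show "norm (f x \<bullet> g x) \<le> A * B" .
  qed
qed

lemma bdd_add:
  fixes f g :: "'p \<Rightarrow> 'a::{real_normed_vector,second_countable_topology}"
  assumes "bdd_meas M f" "bdd_meas M g" shows "bdd_meas M (\<lambda>x. f x + g x)"
proof -
  obtain A where A: "f \<in> borel_measurable M" "\<And>x. norm (f x) \<le> A" using assms(1) by (elim bdd_meas_E) blast
  obtain B where B: "g \<in> borel_measurable M" "\<And>x. norm (g x) \<le> B" using assms(2) by (elim bdd_meas_E) blast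
  show ?thesis
  proof (rule bdd_meas_I)
    show "(\<lambda>x. f x + g x) \<in> borel_measurable M" using A(1) B(1) by (rule borel_measurable_add)
    fix x
    have "norm (f x + g x) \<le> norm (f x) + norm (g x)" by (rule norm_triangle_ineq)
    also have "\<dots> \<le> A + B" using A(2)[of x] B(2)[of x] by (rule add_mono)
    finally show "norm (f x + g x) \<le> A + B" .
  qed
qed

lemma bdd_diff:
  fixes f g :: "'p \<Rightarrow> 'a::{real_normed_vector,second_countable_topology}"
  assumes "bdd_meas M f" "bdd_meas M g" shows "bdd_meas M (\<lambda>x. f x - g x)"
proof -
  obtain A where A: "f \<in> borel_measurable M" "\<And>x. norm (f x) \<le> A" using assms(1) by (elim bdd_meas_E) blast
  obtain B where B: "g \<in> borel_measurable M" "\<And>x. norm (g x) \<le> B" using assms(2) by (elim bdd_meas_E) blast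
  show ?thesis
  proof (rule bdd_meas_I)
    show "(\<lambda>x. f x - g x) \<in> borel_measurable M" using A(1) B(1) by (rule borel_measurable_diff)
    fix x
    have "norm (f x - g x) \<le> norm (f x) + norm (g x)" by (rule norm_triangle_ineq4)
    also have "\<dots> \<le> A + B" using A(2)[of x] B(2)[of x] by (rule add_mono)
    finally show "norm (f x - g x) \<le> A + B" .
  qed
qed

lemma bdd_sum:
  fixes f :: "'i \<Rightarrow> 'p \<Rightarrow> 'a::{real_normed_vector,second_countable_topology}"
  assumes "finite S" "\<And>i. i \<in> S \<Longrightarrow> bdd_meas M (f i)" shows "bdd_meas M (\<lambda>x. \<Sum>i\<in>S. f i x)"
  using assms
proof (induction S rule: finite_induct)
  case empty then show ?case by (simp add: bdd_const)
next
  case (insert a S)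
  have "bdd_meas M (\<lambda>x. f a x + (\<Sum>i\<in>S. f i x))" using insert by (intro bdd_add) auto
  then show ?case using insert(1,2) by simp
qed

lemma bdd_cross:
  fixes f g :: "'p \<Rightarrow> real^3"
  assumes "bdd_meas M f" "bdd_meas M g" shows "bdd_meas M (\<lambda>x. cross3 (f x) (g x))"
proof -
  obtain A where A: "f \<in> borel_measurable M" "\<And>x. norm (f x) \<le> A" using assms(1) by (elim bdd_meas_E) blast
  obtain B where B: "g \<in> borel_measurable M" "\<And>x. norm (g x) \<le> B" using assms(2) by (elim bdd_meas_E) blast
  show ?thesis
  proof (rule bdd_meas_I)
    have c: "continuous_on UNIV (\<lambda>x::(real^3)\<times>(real^3). cross3 (fst x) (snd x))"
      by (intro continuous_on_cross continuous_on_fst continuous_on_snd continuous_on_id)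
    from borel_measurable_continuous_Pair[OF A(1) B(1) c]
    show "(\<lambda>x. cross3 (f x) (g x)) \<in> borel_measurable M" .
    fix x
    have "norm (cross3 (f x) (g x)) \<le> norm (f x) * norm (g x)" by (rule norm_cross_le)
    also have "\<dots> \<le> A * B" using A(2)[of x] B(2)[of x] by (intro mult_mono) (auto intro: order.trans[OF norm_ge_zero])
    finally show "norm (cross3 (f x) (g x)) \<le> A * B" .
  qed
qed


definition ip :: "'p measure \<Rightarrow> ('p \<Rightarrow> 'a::real_inner) \<Rightarrow> ('p \<Rightarrow> 'a) \<Rightarrow> real" where
  "ip M f g = (LINT x|M. f x \<bullet> g x)"

lemma ip_sym: "ip M f g = ip M g f" unfolding ip_def by (simp add: inner_commute)

lemma ip_lin_left:
  fixes u v w :: "'p \<Rightarrow> 'a::{real_inner,second_countable_topology}"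
  assumes "finite_measure M" "bdd_meas M u" "bdd_meas M v" "bdd_meas M w"
  shows "ip M (\<lambda>x. a *\<^sub>R u x + b *\<^sub>R v x) w = a * ip M u w + b * ip M v w"
proof -
  have "integrable M (\<lambda>x. u x \<bullet> w x)" "integrable M (\<lambda>x. v x \<bullet> w x)"
    using assms bdd_inner bdd_integrable by blast+
  then show ?thesis unfolding ip_def by (simp add: inner_add_left)
qed

lemma ip_diff_left:
  fixes u v w :: "'p \<Rightarrow> 'a::{real_inner,second_countable_topology}"
  assumes "finite_measure M" "bdd_meas M u" "bdd_meas M v" "bdd_meas M w"
  shows "ip M (\<lambda>x. u x - v x) w = ip M u w - ip M v w"
  using ip_lin_left[OF assms, of 1 "-1"] by simp

lemma ip_sum_left:
  fixes b :: "'i \<Rightarrow> 'p \<Rightarrow> 'a::{real_inner,second_countable_topology}"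
  assumes "finite_measure M" "finite S" "\<And>i. i \<in> S \<Longrightarrow> bdd_meas M (b i)" "bdd_meas M w"
  shows "ip M (\<lambda>x. \<Sum>i\<in>S. c i *\<^sub>R b i x) w = (\<Sum>i\<in>S. c i * ip M (b i) w)"
proof -
  have "integrable M (\<lambda>x. c i * (b i x \<bullet> w x))" if "i \<in> S" for i
    using assms that bdd_inner bdd_integrable by (metis integrable_mult_right)
  then show ?thesis unfolding ip_def by (simp add: inner_sum_left)
qed

lemma fd_span_I: "f = (\<lambda>x. \<Sum>b\<in>B. c b *\<^sub>R b x) \<Longrightarrow> f \<in> fd_span B"
  unfolding fd_span_def by auto

lemma fd_span_zero: "(\<lambda>x. 0) \<in> fd_span B"
  unfolding fd_span_def by (auto intro!: exI[of _ "\<lambda>_. 0"])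

lemma fd_span_lin:
  assumes "f \<in> fd_span B" "g \<in> fd_span B"
  shows "(\<lambda>x. a *\<^sub>R f x + b *\<^sub>R g x) \<in> fd_span B"
proof -
  obtain c d where "f = (\<lambda>x. \<Sum>v\<in>B. c v *\<^sub>R v x)" "g = (\<lambda>x. \<Sum>v\<in>B. d v *\<^sub>R v x)"
    using assms unfolding fd_span_def by auto
  then have "(\<lambda>x. a *\<^sub>R f x + b *\<^sub>R g x) = (\<lambda>x. \<Sum>v\<in>B. (a * c v + b * d v) *\<^sub>R v x)"
    by (simp add: scaleR_sum_right sum.distrib scaleR_add_left)
  then show ?thesis by (rule fd_span_I)
qed

lemma fd_span_base:
  assumes "finite B" "v \<in> B" shows "v \<in> fd_span B"
proof -
  have "v = (\<lambda>x. \<Sum>w\<in>B. (if w = v then 1 else 0) *\<^sub>R w x)"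
    using assms by (simp add: if_distrib[of "\<lambda>t. t *\<^sub>R _"] cong: if_cong)
  then show ?thesis by (rule fd_span_I)
qed

lemma fd_span_mono_insert:
  assumes "finite B" shows "fd_span B \<subseteq> fd_span (insert v B)"
proof (cases "v \<in> B")
  case True then show ?thesis by (simp add: insert_absorb)
next
  case False
  show ?thesis
  proof
    fix f assume "f \<in> fd_span B"
    then obtain c where f: "f = (\<lambda>x. \<Sum>w\<in>B. c w *\<^sub>R w x)" unfolding fd_span_def by auto
    have "f = (\<lambda>x. \<Sum>w\<in>insert v B. (c(v:=0)) w *\<^sub>R w x)"
      unfolding f using False assms by (auto intro!: sum.cong)
    then show "f \<in> fd_span (insert v B)" by (rule fd_span_I)
  qed
qed

lemma fd_span_bdd:
  assumes "finite B" "\<And>b. b \<in> B \<Longrightarrow> bdd_meas M b" "f \<in> fd_span B"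
  shows "bdd_meas M f"
proof -
  obtain c where f: "f = (\<lambda>x. \<Sum>w\<in>B. c w *\<^sub>R w x)" using assms unfolding fd_span_def by auto
  show ?thesis unfolding f by (rule bdd_sum) (use assms in \<open>auto intro: bdd_scaleR bdd_const\<close>)
qed

lemma ip_span_left:
  fixes w :: "'p \<Rightarrow> 'a::{real_inner,second_countable_topology}"
  assumes "finite_measure M" "finite B" "\<And>b. b \<in> B \<Longrightarrow> bdd_meas M b" "bdd_meas M w"
    "\<And>b. b \<in> B \<Longrightarrow> ip M b w = 0" "f \<in> fd_span B"
  shows "ip M f w = 0"
proof -
  obtain c where f: "f = (\<lambda>x. \<Sum>v\<in>B. c v *\<^sub>R v x)" using assms unfolding fd_span_def by auto
  show ?thesis unfolding f using ip_sum_left[OF assms(1,2), of "\<lambda>v. v", OF assms(3,4)] assms(5) by simp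
qed



lemma ip_lin_right:
  fixes u v w :: "'p \<Rightarrow> 'a::{real_inner,second_countable_topology}"
  assumes "finite_measure M" "bdd_meas M u" "bdd_meas M v" "bdd_meas M w"
  shows "ip M w (\<lambda>x. a *\<^sub>R u x + b *\<^sub>R v x) = a * ip M w u + b * ip M w v"
  using ip_lin_left[OF assms, of a b] by (simp add: ip_sym)

lemma ip_diff_right:
  fixes u v w :: "'p \<Rightarrow> 'a::{real_inner,second_countable_topology}"
  assumes "finite_measure M" "bdd_meas M u" "bdd_meas M v" "bdd_meas M w"
  shows "ip M w (\<lambda>x. u x - v x) = ip M w u - ip M w v"
  using ip_diff_left[OF assms] by (simp add: ip_sym)

lemma ip_zero_AE:
  fixes u v :: "'p \<Rightarrow> 'a::{real_inner,second_countable_topology}"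
  assumes "AE x in M. u x = 0" shows "ip M u v = 0"
  unfolding ip_def by (rule integral_eq_zero_AE) (use assms in auto)

lemma proj_basis:
  fixes B :: "('p \<Rightarrow> 'a::{real_inner,second_countable_topology}) set"
  assumes fm: "finite_measure M" and "finite B" "\<forall>b\<in>B. bdd_meas M b"
  shows "\<forall>h. bdd_meas M h \<longrightarrow> (\<exists>p\<in>fd_span B. \<forall>b\<in>B. ip M b h = ip M b p)"
  using assms(2,3)
proof (induction B rule: finite_induct)
  case empty
  then show ?case using fd_span_zero by blast
next
  case (insert a B)
  have bB: "\<And>b. b \<in> B \<Longrightarrow> bdd_meas M b" using insert by auto
  have ba: "bdd_meas M a" using insert by auto
  have spanbdd: "\<And>f. f \<in> fd_span B \<Longrightarrow> bdd_meas M f" using fd_span_bdd[OF insert(1) bB] by blast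
  have mono: "fd_span B \<subseteq> fd_span (insert a B)" by (rule fd_span_mono_insert[OF insert(1)])
  show ?case
  proof (intro allI impI)
    fix h :: "'p \<Rightarrow> 'a" assume h: "bdd_meas M h"
    obtain p where p: "p \<in> fd_span B" "\<forall>b\<in>B. ip M b h = ip M b p" using insert(3) bB h by blast
    obtain pa where pa: "pa \<in> fd_span B" "\<forall>b\<in>B. ip M b a = ip M b pa" using insert(3) bB ba by blast
    have bp: "bdd_meas M p" and bpa: "bdd_meas M pa" using spanbdd p pa by auto
    define a' where "a' = (\<lambda>x. a x - pa x)"
    define e where "e = (\<lambda>x. h x - p x)"
    have ba': "bdd_meas M a'" unfolding a'_def using ba bpa by (rule bdd_diff)
    have be: "bdd_meas M e" unfolding e_def using h bp by (rule bdd_diff)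
    have orth_a': "\<And>v. v \<in> fd_span B \<Longrightarrow> ip M v a' = 0"
    proof -
      fix v assume v: "v \<in> fd_span B"
      show "ip M v a' = 0"
      proof (rule ip_span_left[OF fm insert(1) bB ba' _ v])
        fix b assume b: "b \<in> B"
        show "ip M b a' = 0" unfolding a'_def using ip_diff_right[OF fm ba bpa bB[OF b]] pa b by simp
      qed
    qed
    have orth_e: "\<And>v. v \<in> fd_span B \<Longrightarrow> ip M v e = 0"
    proof -
      fix v assume v: "v \<in> fd_span B"
      show "ip M v e = 0"
      proof (rule ip_span_left[OF fm insert(1) bB be _ v])
        fix b assume b: "b \<in> B"
        show "ip M b e = 0" unfolding e_def using ip_diff_right[OF fm h bp bB[OF b]] p b by simp
      qed
    qed
    have a_eq: "a = (\<lambda>x. 1 *\<^sub>R a' x + 1 *\<^sub>R pa x)" unfolding a'_def by auto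
    have ipa: "ip M a z = ip M a' z + ip M pa z" if "bdd_meas M z" for z
      using ip_lin_left[OF fm ba' bpa that, of 1 1] a_eq by simp
    have ah: "ip M a h = ip M a p + ip M a' e"
    proof -
      have "ip M a e = ip M a h - ip M a p" unfolding e_def by (rule ip_diff_right[OF fm h bp ba])
      moreover have "ip M a e = ip M a' e" using ipa[OF be] orth_e[OF pa(1)] by simp
      ultimately show ?thesis by simp
    qed
    have a'_span: "a' \<in> fd_span (insert a B)"
    proof -
      have "(\<lambda>x. 1 *\<^sub>R a x + (-1) *\<^sub>R pa x) \<in> fd_span (insert a B)"
        by (rule fd_span_lin) (use fd_span_base[OF _ insertI1] insert(1) mono pa(1) in auto)
      then show ?thesis unfolding a'_def by simp
    qed
    define N where "N = ip M a' a'"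
    show "\<exists>p\<in>fd_span (insert a B). \<forall>b\<in>insert a B. ip M b h = ip M b p"
    proof (cases "N = 0")
      case True
      have "AE x in M. a' x \<bullet> a' x = 0"
      proof -
        have "integrable M (\<lambda>x. a' x \<bullet> a' x)" by (rule bdd_integrable[OF fm bdd_inner[OF ba' ba']])
        then show ?thesis using integral_nonneg_eq_0_iff_AE[of M "\<lambda>x. a' x \<bullet> a' x"] True
          unfolding N_def ip_def by auto
      qed
      then have "AE x in M. a' x = 0" by auto
      then have "ip M a' e = 0" by (rule ip_zero_AE)
      then show ?thesis using ah p mono by (intro bexI[of _ p]) auto
    next
      case False
      define \<alpha> where "\<alpha> = ip M a' e / N"
      define p' where "p' = (\<lambda>x. 1 *\<^sub>R p x + \<alpha> *\<^sub>R a' x)"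
      have p'_span: "p' \<in> fd_span (insert a B)" unfolding p'_def
        by (rule fd_span_lin) (use p(1) mono a'_span in auto)
      have ipp': "ip M z p' = ip M z p + \<alpha> * ip M z a'" if "bdd_meas M z" for z
        unfolding p'_def using ip_lin_right[OF fm bp ba' that, of 1 \<alpha>] by simp
      have "ip M b h = ip M b p'" if b: "b \<in> insert a B" for b
      proof (cases "b = a")
        case True
        have "ip M a a' = N" using ipa[OF ba'] orth_a'[OF pa(1)] unfolding N_def by simp
        then have "ip M a p' = ip M a p + ip M a' e" using ipp'[OF ba] False unfolding \<alpha>_def by simp
        then show ?thesis using ah True by simp
      next
        case False
        then have bB': "b \<in> B" using b by auto
        have "ip M b a' = 0" using orth_a' fd_span_base[OF insert(1) bB'] by blast
        then show ?thesis using ipp'[OF bB[OF bB']] p(2) bB' by simp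
      qed
      then show ?thesis using p'_span by blast
    qed
  qed
qed

lemma proj_exists:
  fixes B :: "('p \<Rightarrow> 'a::{real_inner,second_countable_topology}) set"
  assumes fm: "finite_measure M" and fin: "finite B" and bB: "\<And>b. b \<in> B \<Longrightarrow> bdd_meas M b"
    and h: "bdd_meas M h"
  shows "\<exists>p\<in>fd_span B. \<forall>v\<in>fd_span B. ip M v h = ip M v p"
proof -
  obtain p where p: "p \<in> fd_span B" "\<forall>b\<in>B. ip M b h = ip M b p"
    using proj_basis[OF fm fin] bB h by blast
  have bp: "bdd_meas M p" using fd_span_bdd[OF fin bB p(1)] .
  have be: "bdd_meas M (\<lambda>x. h x - p x)" using h bp by (rule bdd_diff)
  have "ip M v h = ip M v p" if v: "v \<in> fd_span B" for v
  proof -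
    have "ip M v (\<lambda>x. h x - p x) = 0"
    proof (rule ip_span_left[OF fm fin bB be _ v])
      fix b assume b: "b \<in> B"
      show "ip M b (\<lambda>x. h x - p x) = 0" using ip_diff_right[OF fm h bp bB[OF b]] p b by simp
    qed
    then show ?thesis using ip_diff_right[OF fm h bp fd_span_bdd[OF fin bB v]] by simp
  qed
  then show ?thesis using p(1) by blast
qed



definition indep :: "('p \<Rightarrow> 'a::real_vector) set \<Rightarrow> bool" where
  "indep B \<longleftrightarrow> (\<forall>c. (\<lambda>x. \<Sum>b\<in>B. c b *\<^sub>R b x) = (\<lambda>x. 0) \<longrightarrow> (\<forall>b\<in>B. c b = 0))"

lemma remove_dep:
  fixes B :: "('p \<Rightarrow> 'a::real_vector) set"
  assumes fin: "finite B" and k: "k \<in> B" and ck: "c k \<noteq> 0" and z: "(\<lambda>x. \<Sum>b\<in>B. c b *\<^sub>R b x) = (\<lambda>x. 0)"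
  shows "fd_span (B - {k}) = fd_span B"
proof
  have "insert k (B - {k}) = B" using k by auto
  then show "fd_span (B - {k}) \<subseteq> fd_span B" using fd_span_mono_insert[of "B - {k}" k] fin by simp
next
  show "fd_span B \<subseteq> fd_span (B - {k})"
  proof
    fix f assume "f \<in> fd_span B"
    then obtain d where f: "f = (\<lambda>x. \<Sum>b\<in>B. d b *\<^sub>R b x)" unfolding fd_span_def by auto
    have "f = (\<lambda>x. \<Sum>b\<in>B - {k}. (d b - d k * c b / c k) *\<^sub>R b x)"
    proof
      fix x
      have sB: "\<And>g. (\<Sum>b\<in>B. g b) = g k + (\<Sum>b\<in>B - {k}. g b)" for g :: "_ \<Rightarrow> 'a"
        using sum.remove[OF fin k] by simp
      have z0: "c k *\<^sub>R k x + (\<Sum>b\<in>B - {k}. c b *\<^sub>R b x) = 0"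
        using fun_cong[OF z, of x] sB[of "\<lambda>b. c b *\<^sub>R b x"] by simp
      then have e: "c k *\<^sub>R k x = - (\<Sum>b\<in>B - {k}. c b *\<^sub>R b x)"
        by (simp add: eq_neg_iff_add_eq_0)
      have "k x = (1 / c k) *\<^sub>R (c k *\<^sub>R k x)" using ck by simp
      then have kx: "k x = - (1 / c k) *\<^sub>R (\<Sum>b\<in>B - {k}. c b *\<^sub>R b x)"
        using e by simp
      have "(\<Sum>b\<in>B - {k}. (d b - d k * c b / c k) *\<^sub>R b x)
          = (\<Sum>b\<in>B - {k}. d b *\<^sub>R b x) - (d k / c k) *\<^sub>R (\<Sum>b\<in>B - {k}. c b *\<^sub>R b x)"
        by (simp add: scaleR_diff_left sum_subtractf scaleR_sum_right)
      also have "\<dots> = (\<Sum>b\<in>B - {k}. d b *\<^sub>R b x) + d k *\<^sub>R k x"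
        unfolding kx by simp
      also have "\<dots> = f x" unfolding f using sB[of "\<lambda>b. d b *\<^sub>R b x"] by simp
      finally show "f x = (\<Sum>b\<in>B - {k}. (d b - d k * c b / c k) *\<^sub>R b x)" by simp
    qed
    then show "f \<in> fd_span (B - {k})" by (rule fd_span_I)
  qed
qed

lemma exists_indep:
  fixes B :: "('p \<Rightarrow> 'a::real_vector) set"
  assumes "finite B"
  shows "\<exists>B'\<subseteq>B. fd_span B' = fd_span B \<and> indep B'"
  using assms
proof (induction "card B" arbitrary: B rule: less_induct)
  case less
  show ?case
  proof (cases "indep B")
    case True then show ?thesis by blast
  next
    case False
    then obtain c k where z: "(\<lambda>x. \<Sum>b\<in>B. c b *\<^sub>R b x) = (\<lambda>x. 0)" and k: "k \<in> B" "c k \<noteq> 0"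
      unfolding indep_def by blast
    have eq: "fd_span (B - {k}) = fd_span B" by (rule remove_dep[OF less(2) k z])
    have "card (B - {k}) < card B" by (rule card_Diff1_less[OF less(2) k(1)])
    then obtain B' where "B' \<subseteq> B - {k}" "fd_span B' = fd_span (B - {k})" "indep B'"
      using less(1)[of "B - {k}"] less(2) by blast
    then show ?thesis using eq by blast
  qed
qed



locale S5 =
  fixes M :: "'p::topological_space measure"
    and khat :: "'p \<Rightarrow> real^3" and E :: "'p set set"
    and grad :: "('p \<Rightarrow> real) \<Rightarrow> ('p \<Rightarrow> real^3)" and sdiv :: "('p \<Rightarrow> real^3) \<Rightarrow> ('p \<Rightarrow> real)"
    and V0 :: "('p \<Rightarrow> real) set" and V1 :: "('p \<Rightarrow> real^3) set" and V2 :: "('p \<Rightarrow> real) set"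
    and g :: real and f b :: "'p \<Rightarrow> real" and I :: "real set"
    and u F :: "real \<Rightarrow> 'p \<Rightarrow> real^3" and D \<zeta> q :: "real \<Rightarrow> 'p \<Rightarrow> real" and c :: real
  assumes setting: "primal_setting M khat E grad sdiv V0 V1 V2"
    and g_pos: "g > 0"
    and f_Linf: "bdd_meas M f"
    and b_V2: "b \<in> V2"
    and I_int: "is_interval I" and zero_I: "0 \<in> I"
    and u_V1: "\<forall>t\<in>I. u t \<in> V1" and D_V2: "\<forall>t\<in>I. D t \<in> V2"
    and u_C1: "weak_C1 M I V1 u" and D_C1: "weak_C1 M I V2 D"
    and F_V1: "\<forall>t\<in>I. F t \<in> V1" and F_cont: "weak_cont M I V1 F"
    and D_pos: "\<forall>t\<in>I. \<forall>x. D t x > 0"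
    and vort: "\<forall>t\<in>I. \<zeta> t \<in> V0 \<and>
        (\<forall>\<gamma>\<in>V0. (LINT x|M. \<gamma> x * \<zeta> t x) = - (LINT x|M. perp khat (grad \<gamma>) x \<bullet> u t x))"
    and pv: "\<forall>t\<in>I. q t \<in> V0 \<and>
        (\<forall>\<gamma>\<in>V0. (LINT x|M. \<gamma> x * q t x * D t x) = (LINT x|M. \<gamma> x * (\<zeta> t x + f x)))"
    and mom: "\<forall>t\<in>I. \<forall>w\<in>V1.
        ((\<lambda>s. LINT x|M. w x \<bullet> u s x) has_real_derivative
          (- (LINT x|M. w x \<bullet> perp khat (\<lambda>y. q t y *\<^sub>R F t y) x)
           + (LINT x|M. sdiv w x * (g * (D t x + b x) + (1/2) * (norm (u t x))\<^sup>2)))) (at t within I)"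
    and cont: "\<forall>t\<in>I. \<forall>\<phi>\<in>V2.
        ((\<lambda>s. LINT x|M. \<phi> x * D s x) has_real_derivative
          (- (LINT x|M. \<phi> x * sdiv (F t) x))) (at t within I)"
    and q0: "\<forall>x. q 0 x = c"
begin

lemma fm: "finite_measure M" and spM: "space M = UNIV" and setsM: "sets M = sets borel"
  and openpos: "\<And>U. open U \<Longrightarrow> U \<noteq> {} \<Longrightarrow> emeasure M U > 0"
  and khat_meas: "khat \<in> borel_measurable M" and nk: "\<And>x. norm (khat x) = 1"
  and V0fin: "finite_dim_fun_space V0" and V1fin: "finite_dim_fun_space V1" and V2fin: "finite_dim_fun_space V2"
  and V0cont: "\<And>\<gamma>. \<gamma> \<in> V0 \<Longrightarrow> continuous_on UNIV \<gamma>"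
  and V0bdd: "\<And>\<gamma>. \<gamma> \<in> V0 \<Longrightarrow> bdd_meas M \<gamma>"
  and V1bdd: "\<And>w. w \<in> V1 \<Longrightarrow> bdd_meas M w"
  and V1tan: "\<And>w x. w \<in> V1 \<Longrightarrow> w x \<bullet> khat x = 0"
  and V2bdd: "\<And>\<phi>. \<phi> \<in> V2 \<Longrightarrow> bdd_meas M \<phi>"
  and const0: "\<And>c. (\<lambda>_. c) \<in> V0"
  and perpV1: "\<And>\<gamma>. \<gamma> \<in> V0 \<Longrightarrow> perp khat (grad \<gamma>) \<in> V1"
  and sdivV2: "\<And>w. w \<in> V1 \<Longrightarrow> sdiv w \<in> V2"
  and gradtan: "\<And>\<gamma> x. \<gamma> \<in> V0 \<Longrightarrow> grad \<gamma> x \<bullet> khat x = 0"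
  and green: "\<And>\<gamma> w. \<gamma> \<in> V0 \<Longrightarrow> w \<in> V1 \<Longrightarrow> (LINT x|M. \<gamma> x * sdiv w x) = - (LINT x|M. grad \<gamma> x \<bullet> w x)"
  and sdivperp: "\<And>\<gamma>. \<gamma> \<in> V0 \<Longrightarrow> AE x in M. sdiv (perp khat (grad \<gamma>)) x = 0"
  using setting unfolding primal_setting_def by auto

lemma kk: "khat x \<bullet> khat x = 1"
  using nk[of x] by (simp add: power2_norm_eq_inner[symmetric])

lemma khat_bdd: "bdd_meas M khat"
  using khat_meas nk by (intro bdd_meas_I[of _ _ 1]) auto

lemma grad_repr: "\<gamma> \<in> V0 \<Longrightarrow> grad \<gamma> x = cross3 (perp khat (grad \<gamma>) x) (khat x)"
  unfolding perp_def using cross_cross[of "khat x" "grad \<gamma> x"] kk[of x] gradtan[of \<gamma> x] by simp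

lemma grad_bdd: "\<gamma> \<in> V0 \<Longrightarrow> bdd_meas M (grad \<gamma>)"
proof -
  assume g: "\<gamma> \<in> V0"
  have "bdd_meas M (\<lambda>x. cross3 (perp khat (grad \<gamma>) x) (khat x))"
    by (rule bdd_cross[OF V1bdd[OF perpV1[OF g]] khat_bdd])
  moreover have "(\<lambda>x. cross3 (perp khat (grad \<gamma>) x) (khat x)) = grad \<gamma>"
    using grad_repr[OF g] by auto
  ultimately show ?thesis by simp
qed

lemma perp_inner: "\<gamma> \<in> V0 \<Longrightarrow> perp khat (grad \<gamma>) x \<bullet> perp khat h x = grad \<gamma> x \<bullet> h x"
  unfolding perp_def using cross_ip[of "khat x" "grad \<gamma> x" "h x"] kk[of x] gradtan[of \<gamma> x]
  by (simp add: inner_commute)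

lemma intg: "bdd_meas M (h :: 'p \<Rightarrow> real) \<Longrightarrow> integrable M h"
  by (rule bdd_integrable[OF fm])

lemma pv_deriv:
  assumes t: "t \<in> I" and g: "\<gamma> \<in> V0"
  shows "((\<lambda>s. LINT x|M. \<gamma> x * q s x * D s x) has_real_derivative
           (LINT x|M. q t x * (grad \<gamma> x \<bullet> F t x))) (at t within I)"
proof -
  define w where "w = perp khat (grad \<gamma>)"
  have w: "w \<in> V1" unfolding w_def by (rule perpV1[OF g])
  define C where "C = (LINT x|M. \<gamma> x * f x)"
  have eq: "(LINT x|M. \<gamma> x * q s x * D s x) = - (LINT x|M. w x \<bullet> u s x) + C" if s: "s \<in> I" for s
  proof -
    have z: "\<zeta> s \<in> V0" using vort s by blast
    have "(LINT x|M. \<gamma> x * q s x * D s x) = (LINT x|M. \<gamma> x * (\<zeta> s x + f x))" using pv s g by blast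
    also have "\<dots> = (LINT x|M. \<gamma> x * \<zeta> s x + \<gamma> x * f x)" by (simp add: distrib_left)
    also have "\<dots> = (LINT x|M. \<gamma> x * \<zeta> s x) + C" unfolding C_def
      by (rule Bochner_Integration.integral_add) (rule intg bdd_mult V0bdd[OF g] V0bdd[OF z] f_Linf)+
    also have "(LINT x|M. \<gamma> x * \<zeta> s x) = - (LINT x|M. w x \<bullet> u s x)" unfolding w_def using vort s g by blast
    finally show ?thesis .
  qed
  have m: "((\<lambda>s. LINT x|M. w x \<bullet> u s x) has_real_derivative
          (- (LINT x|M. w x \<bullet> perp khat (\<lambda>y. q t y *\<^sub>R F t y) x)
           + (LINT x|M. sdiv w x * (g * (D t x + b x) + (1/2) * (norm (u t x))\<^sup>2)))) (at t within I)"
    using mom t w by blast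
  have z2: "(LINT x|M. sdiv w x * (g * (D t x + b x) + (1/2) * (norm (u t x))\<^sup>2)) = 0"
    by (rule integral_eq_zero_AE) (use sdivperp[OF g] in \<open>auto simp: w_def\<close>)
  have z1: "(LINT x|M. w x \<bullet> perp khat (\<lambda>y. q t y *\<^sub>R F t y) x) = (LINT x|M. q t x * (grad \<gamma> x \<bullet> F t x))"
    unfolding w_def using perp_inner[OF g] by simp
  have "((\<lambda>s. - (LINT x|M. w x \<bullet> u s x) + C) has_real_derivative
           (LINT x|M. q t x * (grad \<gamma> x \<bullet> F t x))) (at t within I)"
    using DERIV_add[OF DERIV_minus[OF m] DERIV_const[of C]] z1 z2 by simp
  then show ?thesis
    by (rule has_field_derivative_transform_within[where d=1]) (use eq t in auto)
qed

end


lemma ip_real: "ip M u v = (LINT x|M. u x * v x)" for u v :: "'p \<Rightarrow> real"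
  unfolding ip_def by simp

context S5 begin

lemma V2_basis: obtains B2 where "finite B2" "V2 = fd_span B2" "\<And>b. b \<in> B2 \<Longrightarrow> bdd_meas M b"
proof -
  obtain B2 where B2: "finite B2" "V2 = fd_span B2" using V2fin unfolding finite_dim_fun_space_def by blast
  then have "\<And>b. b \<in> B2 \<Longrightarrow> bdd_meas M b" using V2bdd fd_span_base by blast
  then show ?thesis using B2 that by blast
qed

lemma V1_basis: obtains B1 where "finite B1" "V1 = fd_span B1" "\<And>b. b \<in> B1 \<Longrightarrow> bdd_meas M b"
proof -
  obtain B1 where B1: "finite B1" "V1 = fd_span B1" using V1fin unfolding finite_dim_fun_space_def by blast
  then have "\<And>b. b \<in> B1 \<Longrightarrow> bdd_meas M b" using V1bdd fd_span_base by blast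
  then show ?thesis using B1 that by blast
qed

lemma proj2: assumes "bdd_meas M h" obtains p where "p \<in> V2" "\<And>v. v \<in> V2 \<Longrightarrow> ip M v h = ip M v p"
proof -
  obtain B2 where B2: "finite B2" "V2 = fd_span B2" "\<And>b. b \<in> B2 \<Longrightarrow> bdd_meas M b" using V2_basis by metis
  show ?thesis using proj_exists[OF fm B2(1) B2(3) assms] B2(2) that by blast
qed

lemma proj1: assumes "bdd_meas M h" obtains p where "p \<in> V1" "\<And>v. v \<in> V1 \<Longrightarrow> ip M v h = ip M v p"
proof -
  obtain B1 where B1: "finite B1" "V1 = fd_span B1" "\<And>b. b \<in> B1 \<Longrightarrow> bdd_meas M b" using V1_basis by metis
  show ?thesis using proj_exists[OF fm B1(1) B1(3) assms] B1(2) that by blast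
qed

lemma D_deriv:
  assumes t: "t \<in> I" and g: "\<gamma> \<in> V0"
  shows "((\<lambda>s. LINT x|M. \<gamma> x * D s x) has_real_derivative (LINT x|M. grad \<gamma> x \<bullet> F t x)) (at t within I)"
proof -
  obtain p where p: "p \<in> V2" "\<And>v. v \<in> V2 \<Longrightarrow> ip M v \<gamma> = ip M v p" using proj2[OF V0bdd[OF g]] by blast
  have eq: "(LINT x|M. \<gamma> x * D s x) = (LINT x|M. p x * D s x)" if s: "s \<in> I" for s
    using p(2)[of "D s"] D_V2 s unfolding ip_real by (simp add: mult.commute)
  have Ft: "F t \<in> V1" using F_V1 t by blast
  have sF: "sdiv (F t) \<in> V2" by (rule sdivV2[OF Ft])
  have cd: "((\<lambda>s. LINT x|M. p x * D s x) has_real_derivative - (LINT x|M. p x * sdiv (F t) x)) (at t within I)"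
    using cont t p(1) by blast
  have "(LINT x|M. p x * sdiv (F t) x) = (LINT x|M. \<gamma> x * sdiv (F t) x)"
    using p(2)[OF sF] unfolding ip_real by (simp add: mult.commute)
  also have "\<dots> = - (LINT x|M. grad \<gamma> x \<bullet> F t x)" by (rule green[OF g Ft])
  finally have "((\<lambda>s. LINT x|M. p x * D s x) has_real_derivative (LINT x|M. grad \<gamma> x \<bullet> F t x)) (at t within I)"
    using cd by simp
  then show ?thesis
    by (rule has_field_derivative_transform_within[where d=1]) (use eq t in auto)
qed

definition r :: "real \<Rightarrow> 'p \<Rightarrow> real" where "r s = (\<lambda>x. q s x - c)"

definition m :: "('p \<Rightarrow> real) \<Rightarrow> real \<Rightarrow> real" where
  "m \<gamma> s = (LINT x|M. \<gamma> x * r s x * D s x)"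

lemma q_bdd: "s \<in> I \<Longrightarrow> bdd_meas M (q s)" using pv V0bdd by blast
lemma D_bdd: "s \<in> I \<Longrightarrow> bdd_meas M (D s)" using D_V2 V2bdd by blast
lemma F_bdd: "s \<in> I \<Longrightarrow> bdd_meas M (F s)" using F_V1 V1bdd by blast

lemma r_V0: "s \<in> I \<Longrightarrow> r s \<in> V0"
proof -
  assume s: "s \<in> I"
  obtain B where B: "finite B" "V0 = fd_span B" using V0fin unfolding finite_dim_fun_space_def by blast
  have "(\<lambda>x. 1 *\<^sub>R q s x + (-c) *\<^sub>R (\<lambda>_. 1::real) x) \<in> fd_span B"
    by (rule fd_span_lin) (use pv s const0 B in auto)
  then show ?thesis unfolding r_def using B by simp
qed

lemma m_deriv:
  assumes t: "t \<in> I" and g: "\<gamma> \<in> V0"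
  shows "(m \<gamma> has_real_derivative (LINT x|M. r t x * (grad \<gamma> x \<bullet> F t x))) (at t within I)"
proof -
  have eq: "m \<gamma> s = (LINT x|M. \<gamma> x * q s x * D s x) - c * (LINT x|M. \<gamma> x * D s x)" if s: "s \<in> I" for s
  proof -
    have i1: "integrable M (\<lambda>x. \<gamma> x * q s x * D s x)"
      by (intro intg bdd_mult V0bdd[OF g] q_bdd[OF s] D_bdd[OF s])
    have i2: "integrable M (\<lambda>x. c * (\<gamma> x * D s x))"
      by (intro intg bdd_mult bdd_const V0bdd[OF g] D_bdd[OF s])
    have "m \<gamma> s = (LINT x|M. \<gamma> x * q s x * D s x - c * (\<gamma> x * D s x))"
      unfolding m_def r_def by (simp add: algebra_simps)
    also have "\<dots> = (LINT x|M. \<gamma> x * q s x * D s x) - (LINT x|M. c * (\<gamma> x * D s x))"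
      by (rule Bochner_Integration.integral_diff[OF i1 i2])
    finally show ?thesis by simp
  qed
  have gF: "bdd_meas M (\<lambda>x. grad \<gamma> x \<bullet> F t x)" by (intro bdd_inner grad_bdd[OF g] F_bdd[OF t])
  have j1: "integrable M (\<lambda>x. q t x * (grad \<gamma> x \<bullet> F t x))" by (intro intg bdd_mult q_bdd[OF t] gF)
  have j2: "integrable M (\<lambda>x. c * (grad \<gamma> x \<bullet> F t x))" by (intro intg bdd_mult bdd_const gF)
  have "(LINT x|M. r t x * (grad \<gamma> x \<bullet> F t x)) =
      (LINT x|M. q t x * (grad \<gamma> x \<bullet> F t x) - c * (grad \<gamma> x \<bullet> F t x))"
    unfolding r_def by (simp add: algebra_simps)
  also have "\<dots> = (LINT x|M. q t x * (grad \<gamma> x \<bullet> F t x)) - c * (LINT x|M. grad \<gamma> x \<bullet> F t x)"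
    using Bochner_Integration.integral_diff[OF j1 j2] by simp
  finally have val: "(LINT x|M. r t x * (grad \<gamma> x \<bullet> F t x)) = \<dots>" .
  have "((\<lambda>s. (LINT x|M. \<gamma> x * q s x * D s x) - c * (LINT x|M. \<gamma> x * D s x)) has_real_derivative
       (LINT x|M. q t x * (grad \<gamma> x \<bullet> F t x)) - c * (LINT x|M. grad \<gamma> x \<bullet> F t x)) (at t within I)"
    by (intro DERIV_diff DERIV_cmult pv_deriv[OF t g] D_deriv[OF t g])
  then show ?thesis unfolding val
    by (rule has_field_derivative_transform_within[where d=1]) (use eq t in auto)
qed

lemma m0: "\<gamma> \<in> V0 \<Longrightarrow> m \<gamma> 0 = 0"
  unfolding m_def r_def using q0 by simp

end


lemma sum_int:
  fixes f :: "'i \<Rightarrow> 'p \<Rightarrow> real"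
  assumes fm: "finite_measure M" and "finite S" "\<And>i. i \<in> S \<Longrightarrow> bdd_meas M (f i)" "bdd_meas M g"
  shows "(LINT x|M. (\<Sum>i\<in>S. a i * f i x) * g x) = (\<Sum>i\<in>S. a i * (LINT x|M. f i x * g x))"
proof -
  have "(LINT x|M. (\<Sum>i\<in>S. a i * f i x) * g x) = (LINT x|M. (\<Sum>i\<in>S. a i * (f i x * g x)))"
    by (simp add: sum_distrib_right mult.assoc)
  also have "\<dots> = (\<Sum>i\<in>S. (LINT x|M. a i * (f i x * g x)))"
    by (rule Bochner_Integration.integral_sum) (use assms in \<open>auto intro!: bdd_integrable[OF fm] bdd_mult bdd_const\<close>)
  also have "\<dots> = (\<Sum>i\<in>S. a i * (LINT x|M. f i x * g x))" by simp
  finally show ?thesis .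
qed

lemma sum_int_id:
  fixes S :: "('p \<Rightarrow> real) set"
  assumes fm: "finite_measure M" and "finite S" "\<And>i. i \<in> S \<Longrightarrow> bdd_meas M i" "bdd_meas M g"
  shows "(LINT x|M. (\<Sum>i\<in>S. a i * i x) * g x) = (\<Sum>i\<in>S. a i * (LINT x|M. i x * g x))"
  using sum_int[of M S "\<lambda>i. i" g a] assms by blast

context S5 begin

lemma cont_AE_zero:
  assumes h: "continuous_on UNIV h" and ae: "AE x in M. h x = (0::real)"
  shows "h x = 0"
proof (rule ccontr)
  assume nz: "h x \<noteq> 0"
  define U where "U = {x. h x \<noteq> 0}"
  have oU: "open U" unfolding U_def by (rule open_Collect_neq[OF h continuous_on_const])
  have sU: "U \<in> sets M" using oU setsM by simp
  have e: "{x \<in> space M. \<not> h x = 0} = U" unfolding U_def spM by simp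
  have "emeasure M U = 0" using AE_iff_measurable[OF sU e] ae by simp
  moreover have "emeasure M U > 0" using openpos[OF oU] nz unfolding U_def by auto
  ultimately show False by simp
qed

definition B0 where "B0 = (SOME B. finite B \<and> V0 = fd_span B \<and> indep B)"

lemma B0_props: "finite B0 \<and> V0 = fd_span B0 \<and> indep B0"
proof -
  obtain B where B: "finite B" "V0 = fd_span B" using V0fin unfolding finite_dim_fun_space_def by blast
  obtain B' where "B' \<subseteq> B" "fd_span B' = fd_span B" "indep B'" using exists_indep[OF B(1)] by blast
  moreover have "finite B'" using finite_subset[OF \<open>B' \<subseteq> B\<close> B(1)] .
  ultimately have "finite B' \<and> V0 = fd_span B' \<and> indep B'" using B(2) by simp
  then show ?thesis unfolding B0_def by (rule someI)
qed

lemma B0_fin: "finite B0" and B0_span: "fd_span B0 = V0" and B0_indep: "indep B0"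
  using B0_props by auto

lemma B0_V0: "v \<in> B0 \<Longrightarrow> v \<in> V0" using fd_span_base[OF B0_fin] B0_span by blast
lemma B0_bdd: "v \<in> B0 \<Longrightarrow> bdd_meas M v" using B0_V0 V0bdd by blast

lemma B0_ne: "B0 \<noteq> {}"
proof
  assume e: "B0 = {}"
  have "fd_span {} = V0" using B0_span unfolding e .
  moreover have "(\<lambda>_::'p. 1::real) \<in> V0" by (rule const0)
  ultimately have "(\<lambda>_::'p. 1::real) \<in> fd_span {}" by simp
  then show False unfolding fd_span_def by (auto dest: fun_cong)
qed

definition A where "A i j s = (LINT x|M. i x * (j x * D s x))"
definition G where "G i j s = (LINT x|M. i x * (grad j x \<bullet> F s x))"

lemma A_cont: assumes i: "i \<in> V0" and j: "j \<in> V0" shows "continuous_on I (A i j)"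
proof -
  have bij: "bdd_meas M (\<lambda>x. i x * j x)" by (intro bdd_mult V0bdd i j)
  obtain p where p: "p \<in> V2" "\<And>v. v \<in> V2 \<Longrightarrow> ip M v (\<lambda>x. i x * j x) = ip M v p" using proj2[OF bij] by blast
  have eq: "A i j s = (LINT x|M. p x * D s x)" if s: "s \<in> I" for s
    using p(2)[of "D s"] D_V2 s unfolding ip_real A_def by (simp add: mult.commute mult.left_commute)
  have "continuous_on I (\<lambda>s. LINT x|M. p x * D s x)"
    unfolding continuous_on_eq_continuous_within
  proof
    fix t assume t: "t \<in> I"
    have "((\<lambda>s. LINT x|M. p x * D s x) has_real_derivative - (LINT x|M. p x * sdiv (F t) x)) (at t within I)"
      using cont t p(1) by blast
    then show "continuous (at t within I) (\<lambda>s. LINT x|M. p x * D s x)" by (rule DERIV_continuous)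
  qed
  then show ?thesis by (rule continuous_on_eq) (use eq in simp)
qed

lemma G_cont: assumes i: "i \<in> V0" and j: "j \<in> V0" shows "continuous_on I (G i j)"
proof -
  define w where "w = (\<lambda>x. i x *\<^sub>R grad j x)"
  have bw: "bdd_meas M w" unfolding w_def by (intro bdd_scaleR V0bdd i grad_bdd j)
  obtain p where p: "p \<in> V1" "\<And>v. v \<in> V1 \<Longrightarrow> ip M v w = ip M v p" using proj1[OF bw] by blast
  have eq: "G i j s = (LINT x|M. p x \<bullet> F s x)" if s: "s \<in> I" for s
  proof -
    have "G i j s = ip M (F s) w" unfolding G_def ip_def w_def by (simp add: inner_commute)
    also have "\<dots> = ip M (F s) p" using p(2) F_V1 s by blast
    also have "\<dots> = (LINT x|M. p x \<bullet> F s x)" unfolding ip_def by (simp add: inner_commute)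
    finally show ?thesis .
  qed
  have "continuous_on I (\<lambda>s. LINT x|M. p x \<bullet> F s x)" using F_cont p(1) unfolding weak_cont_def by blast
  then show ?thesis by (rule continuous_on_eq) (use eq in simp)
qed

lemma repr: assumes s: "s \<in> I" shows "\<exists>a. r s = (\<lambda>x. \<Sum>i\<in>B0. a i * i x)"
proof -
  obtain a where "r s = (\<lambda>x. \<Sum>i\<in>B0. a i *\<^sub>R i x)" using r_V0[OF s] B0_span unfolding fd_span_def by blast
  then show ?thesis by (intro exI[of _ a]) simp
qed

lemma lin_A:
  assumes s: "s \<in> I" and j: "j \<in> V0"
  shows "(LINT x|M. j x * (\<Sum>i\<in>B0. a i * i x) * D s x) = (\<Sum>i\<in>B0. a i * A i j s)"
proof -
  have "(LINT x|M. j x * (\<Sum>i\<in>B0. a i * i x) * D s x) = (LINT x|M. (\<Sum>i\<in>B0. a i * i x) * (j x * D s x))"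
    by (simp add: ac_simps)
  also have "\<dots> = (\<Sum>i\<in>B0. a i * (LINT x|M. i x * (j x * D s x)))"
    by (rule sum_int_id[OF fm B0_fin B0_bdd]; (assumption | intro bdd_mult V0bdd j D_bdd s))
  finally show ?thesis unfolding A_def .
qed

lemma lin_G:
  assumes s: "s \<in> I" and j: "j \<in> V0"
  shows "(LINT x|M. (\<Sum>i\<in>B0. a i * i x) * (grad j x \<bullet> F s x)) = (\<Sum>i\<in>B0. a i * G i j s)"
  unfolding G_def by (rule sum_int_id[OF fm B0_fin B0_bdd]; (assumption | intro bdd_inner grad_bdd j F_bdd s))

definition H where "H s \<kappa> = (\<Sum>j\<in>B0. \<bar>\<Sum>i\<in>B0. \<kappa> i * A i j s\<bar>)"

lemma H_pos:
  assumes s: "s \<in> I" and c1: "(\<Sum>b\<in>B0. \<bar>\<kappa> b\<bar>) = 1"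
  shows "H s \<kappa> > 0"
proof (rule ccontr)
  assume "\<not> H s \<kappa> > 0"
  moreover have "H s \<kappa> \<ge> 0" unfolding H_def by (rule sum_nonneg) simp
  ultimately have "H s \<kappa> = 0" by linarith
  then have "(\<Sum>j\<in>B0. \<bar>\<Sum>i\<in>B0. \<kappa> i * A i j s\<bar>) = 0" unfolding H_def .
  then have "\<forall>j\<in>B0. \<bar>\<Sum>i\<in>B0. \<kappa> i * A i j s\<bar> = 0"
    by (subst (asm) sum_nonneg_eq_0_iff[OF B0_fin]) auto
  then have z: "\<And>j. j \<in> B0 \<Longrightarrow> (\<Sum>i\<in>B0. \<kappa> i * A i j s) = 0" by auto
  define rc where "rc = (\<lambda>x. \<Sum>i\<in>B0. \<kappa> i * i x)"
  have "rc \<in> fd_span B0" unfolding rc_def by (rule fd_span_I) simp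
  then have rcV0: "rc \<in> V0" using B0_span by simp
  have brc: "bdd_meas M rc" by (rule V0bdd[OF rcV0])
  have "(LINT x|M. rc x * rc x * D s x) = (LINT x|M. (\<Sum>j\<in>B0. \<kappa> j * j x) * (rc x * D s x))"
    unfolding rc_def by (simp only: mult.assoc)
  also have "\<dots> = (\<Sum>j\<in>B0. \<kappa> j * (LINT x|M. j x * (rc x * D s x)))"
    by (rule sum_int_id[OF fm B0_fin B0_bdd]; (assumption | intro bdd_mult brc D_bdd s))
  also have "\<dots> = (\<Sum>j\<in>B0. \<kappa> j * (\<Sum>i\<in>B0. \<kappa> i * A i j s))"
  proof (rule sum.cong[OF refl])
    fix j assume j: "j \<in> B0"
    have "(LINT x|M. j x * (rc x * D s x)) = (LINT x|M. j x * (\<Sum>i\<in>B0. \<kappa> i * i x) * D s x)"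
      unfolding rc_def by (simp only: mult.assoc)
    also have "\<dots> = (\<Sum>i\<in>B0. \<kappa> i * A i j s)" by (rule lin_A[OF s B0_V0[OF j]])
    finally show "\<kappa> j * (LINT x|M. j x * (rc x * D s x)) = \<kappa> j * (\<Sum>i\<in>B0. \<kappa> i * A i j s)" by simp
  qed
  also have "\<dots> = 0" using z by simp
  finally have int0: "(LINT x|M. rc x * rc x * D s x) = 0" .
  have pos: "\<And>x. 0 \<le> rc x * rc x * D s x" using D_pos s by (simp add: less_imp_le)
  have intr: "integrable M (\<lambda>x. rc x * rc x * D s x)" by (intro intg bdd_mult brc D_bdd s)
  have "AE x in M. 0 \<le> rc x * rc x * D s x" using pos by simp
  from integral_nonneg_eq_0_iff_AE[OF intr this] int0
  have "AE x in M. rc x * rc x * D s x = 0" by simp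
  then have "AE x in M. rc x = 0"
  proof eventually_elim
    fix x assume "rc x * rc x * D s x = 0"
    moreover have "D s x \<noteq> 0" using D_pos s by (metis less_irrefl)
    ultimately show "rc x = 0" by simp
  qed
  then have "\<And>x. rc x = 0" using cont_AE_zero[OF V0cont[OF rcV0]] by blast
  then have "(\<lambda>x. \<Sum>b\<in>B0. \<kappa> b *\<^sub>R b x) = (\<lambda>x. 0)" unfolding rc_def by (intro ext) simp
  then have "\<forall>b\<in>B0. \<kappa> b = 0" using B0_indep unfolding indep_def by blast
  then show False using c1 by simp
qed

end


context S5 begin

definition dm where "dm j s = (LINT x|M. r s x * (grad j x \<bullet> F s x))"
definition En where "En s = (\<Sum>j\<in>B0. m j s * m j s)"
definition Enp where "Enp s = (\<Sum>j\<in>B0. dm j s * m j s + m j s * dm j s)"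

lemma E_deriv: assumes t: "t \<in> I" shows "(En has_real_derivative Enp t) (at t within I)"
  unfolding En_def Enp_def
proof (rule DERIV_sum)
  fix n assume n: "n \<in> B0"
  have d: "(m n has_real_derivative dm n t) (at t within I)" unfolding dm_def by (rule m_deriv[OF t B0_V0[OF n]])
  from DERIV_mult[OF d d] show "((\<lambda>s. m n s * m n s) has_real_derivative dm n t * m n t + m n t * dm n t) (at t within I)" by (simp add: mult.commute)
qed

lemma E_nonneg: "En s \<ge> 0" unfolding En_def by (intro sum_nonneg) simp

lemma E0: "En 0 = 0" unfolding En_def using m0 B0_V0 by simp

lemma bound_core:
  assumes s: "s \<in> I" and dpos: "\<delta> > 0" and K1: "K1 \<ge> 0"
    and Gs: "\<And>i j. i \<in> B0 \<Longrightarrow> j \<in> B0 \<Longrightarrow> \<bar>G i j s\<bar> \<le> K1"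
    and Hs: "\<And>a. \<delta> * (\<Sum>i\<in>B0. \<bar>a i\<bar>) \<le> H s a"
  shows "\<bar>Enp s\<bar> \<le> (2 * K1 * card B0 / \<delta>) * En s" and "En s = 0 \<Longrightarrow> r s x = 0"
proof -
  obtain a where a: "r s = (\<lambda>x. \<Sum>i\<in>B0. a i * i x)" using repr[OF s] by blast
  define \<sigma> where "\<sigma> = (\<Sum>i\<in>B0. \<bar>a i\<bar>)"
  define \<mu> where "\<mu> = (\<Sum>j\<in>B0. \<bar>m j s\<bar>)"
  have mA: "m j s = (\<Sum>i\<in>B0. a i * A i j s)" if j: "j \<in> B0" for j
    unfolding m_def a using lin_A[OF s B0_V0[OF j]] by simp
  have dmG: "dm j s = (\<Sum>i\<in>B0. a i * G i j s)" if j: "j \<in> B0" for j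
    unfolding dm_def a using lin_G[OF s B0_V0[OF j]] by simp
  have Hm: "H s a = \<mu>" unfolding H_def \<mu>_def using mA by simp
  have sig: "\<delta> * \<sigma> \<le> \<mu>" using Hs[of a] Hm unfolding \<sigma>_def by simp
  have sig0: "\<sigma> \<ge> 0" "\<mu> \<ge> 0" unfolding \<sigma>_def \<mu>_def by (auto intro: sum_nonneg)
  have dmb: "\<bar>dm j s\<bar> \<le> K1 * \<sigma>" if j: "j \<in> B0" for j
  proof -
    have "\<bar>dm j s\<bar> \<le> (\<Sum>i\<in>B0. \<bar>a i * G i j s\<bar>)" unfolding dmG[OF j] by (rule sum_abs)
    also have "\<dots> \<le> (\<Sum>i\<in>B0. \<bar>a i\<bar> * K1)"
      by (rule sum_mono) (use Gs j in \<open>auto simp: abs_mult intro: mult_left_mono\<close>)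
    also have "\<dots> = \<sigma> * K1" unfolding \<sigma>_def by (rule sum_distrib_right[symmetric])
    also have "\<dots> = K1 * \<sigma>" by simp
    finally show ?thesis .
  qed
  have "\<bar>Enp s\<bar> \<le> (\<Sum>j\<in>B0. \<bar>dm j s * m j s + m j s * dm j s\<bar>)" unfolding Enp_def by (rule sum_abs)
  also have "\<dots> \<le> (\<Sum>j\<in>B0. 2 * (K1 * \<sigma>) * \<bar>m j s\<bar>)"
  proof (rule sum_mono)
    fix j assume j: "j \<in> B0"
    have "\<bar>dm j s * m j s + m j s * dm j s\<bar> = 2 * \<bar>dm j s\<bar> * \<bar>m j s\<bar>" by (simp add: abs_mult)
    also have "\<dots> \<le> 2 * (K1 * \<sigma>) * \<bar>m j s\<bar>" using dmb[OF j] by (intro mult_right_mono) auto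
    finally show "\<bar>dm j s * m j s + m j s * dm j s\<bar> \<le> 2 * (K1 * \<sigma>) * \<bar>m j s\<bar>" .
  qed
  also have "\<dots> = 2 * K1 * \<sigma> * \<mu>" unfolding \<mu>_def by (simp add: sum_distrib_left mult.assoc)
  also have "\<dots> \<le> 2 * K1 * (\<mu> / \<delta>) * \<mu>"
  proof -
    have "\<sigma> \<le> \<mu> / \<delta>" using sig dpos by (simp add: field_simps mult.commute)
    then show ?thesis using K1 sig0 by (intro mult_right_mono mult_left_mono) auto
  qed
  also have "\<dots> = (2 * K1 / \<delta>) * \<mu>\<^sup>2" by (simp add: power2_eq_square)
  also have "\<dots> \<le> (2 * K1 / \<delta>) * (card B0 * En s)"
  proof -
    have "\<mu>\<^sup>2 = (\<Sum>j\<in>B0. 1 * \<bar>m j s\<bar>)\<^sup>2" unfolding \<mu>_def by simp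
    also have "\<dots> \<le> (\<Sum>j\<in>B0. 1\<^sup>2) * (\<Sum>j\<in>B0. \<bar>m j s\<bar>\<^sup>2)" by (rule Cauchy_Schwarz_ineq_sum)
    also have "\<dots> = card B0 * En s" unfolding En_def by (simp add: power2_eq_square)
    finally show ?thesis using K1 dpos by (intro mult_left_mono) auto
  qed
  also have "\<dots> = (2 * K1 * card B0 / \<delta>) * En s" by simp
  finally show "\<bar>Enp s\<bar> \<le> (2 * K1 * card B0 / \<delta>) * En s" .
  assume E0: "En s = 0"
  have "\<forall>j\<in>B0. m j s * m j s = 0"
    using E0 unfolding En_def by (subst (asm) sum_nonneg_eq_0_iff[OF B0_fin]) auto
  then have "\<mu> = 0" unfolding \<mu>_def by simp
  then have "\<sigma> = 0" using sig sig0 dpos by (simp add: mult_le_0_iff) 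
  then have "\<forall>i\<in>B0. a i = 0" unfolding \<sigma>_def by (subst (asm) sum_nonneg_eq_0_iff[OF B0_fin]) auto
  then show "r s x = 0" unfolding a by simp
qed

end


context S5 begin

lemma K1_ex:
  assumes J: "compact J" "J \<subseteq> I" "J \<noteq> {}"
  shows "\<exists>K1\<ge>0. \<forall>s\<in>J. \<forall>i\<in>B0. \<forall>j\<in>B0. \<bar>G i j s\<bar> \<le> K1"
proof -
  define f where "f s = (\<Sum>i\<in>B0. \<Sum>j\<in>B0. \<bar>G i j s\<bar>)" for s
  have "continuous_on J f" unfolding f_def
    by (intro continuous_on_sum continuous_on_rabs continuous_on_subset[OF G_cont J(2)] B0_V0)
  then obtain s1 where s1: "s1 \<in> J" "\<forall>y\<in>J. f y \<le> f s1" using continuous_attains_sup[OF J(1,3)] by blast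
  have "f s1 \<ge> 0" unfolding f_def by (intro sum_nonneg) auto
  moreover have "\<bar>G i j s\<bar> \<le> f s1" if "s \<in> J" "i \<in> B0" "j \<in> B0" for s i j
  proof -
    have "\<bar>G i j s\<bar> \<le> (\<Sum>j\<in>B0. \<bar>G i j s\<bar>)" by (rule member_le_sum) (use that B0_fin in auto)
    also have "\<dots> \<le> f s" unfolding f_def
      by (rule member_le_sum[of i B0 "\<lambda>i. \<Sum>j\<in>B0. \<bar>G i j s\<bar>"]) (use that B0_fin in \<open>auto intro: sum_nonneg\<close>)
    also have "\<dots> \<le> f s1" using s1 that by blast
    finally show ?thesis .
  qed
  ultimately show ?thesis by blast
qed

lemma H_homog:
  assumes sg: "(\<Sum>i\<in>B0. \<bar>a i\<bar>) = \<sigma>" and pos: "\<sigma> > 0"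
  shows "H s a = \<sigma> * H s (\<lambda>b. if b \<in> B0 then a b / \<sigma> else 0)"
proof -
  have "H s (\<lambda>b. if b \<in> B0 then a b / \<sigma> else 0) = (\<Sum>j\<in>B0. \<bar>\<Sum>i\<in>B0. a i * A i j s / \<sigma>\<bar>)"
    unfolding H_def by (intro sum.cong refl arg_cong[where f=abs]) auto
  also have "\<dots> = (\<Sum>j\<in>B0. \<bar>\<Sum>i\<in>B0. a i * A i j s\<bar>) / \<sigma>"
    using pos by (simp add: sum_divide_distrib[symmetric])
  finally show ?thesis unfolding H_def using pos by simp
qed

lemma delta_ex:
  assumes J: "compact J" "J \<subseteq> I" "J \<noteq> {}"
  shows "\<exists>\<delta>>0. \<forall>s\<in>J. \<forall>a. \<delta> * (\<Sum>i\<in>B0. \<bar>a i\<bar>) \<le> H s a"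
proof -
  define box :: "(('p \<Rightarrow> real) \<Rightarrow> real) set" where
    "box = PiE UNIV (\<lambda>b. if b \<in> B0 then {-1..1} else {0})"
  have "compactin (product_topology (\<lambda>_. euclidean) UNIV) box" unfolding box_def
    by (subst compactin_PiE) auto
  then have cbox: "compact box" unfolding euclidean_product_topology by simp
  define S where "S = box \<inter> {\<kappa>. (\<Sum>b\<in>B0. \<bar>\<kappa> b\<bar>) = 1}"
  have "closed {\<kappa>::('p \<Rightarrow> real) \<Rightarrow> real. (\<Sum>b\<in>B0. \<bar>\<kappa> b\<bar>) = 1}"
    by (intro closed_Collect_eq continuous_on_sum continuous_on_rabs continuous_on_const
        continuous_on_product_coordinates)
  then have cS: "compact S" unfolding S_def using cbox by (rule compact_Int_closed[rotated])
  obtain b0 where b0: "b0 \<in> B0" using B0_ne by blast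
  define \<kappa>0 where "\<kappa>0 = (\<lambda>b. if b = b0 then 1 else 0::real)"
  have "\<kappa>0 \<in> S" unfolding S_def box_def \<kappa>0_def using b0 B0_fin by (auto simp: PiE_UNIV_domain)
  then have neS: "S \<noteq> {}" by blast
  have cJS: "compact (J \<times> S)" by (rule compact_Times[OF J(1) cS])
  have neJS: "J \<times> S \<noteq> {}" using J(3) neS by blast
  have cA: "continuous_on (J \<times> S) (\<lambda>z. A i j (fst z))" if "i \<in> B0" "j \<in> B0" for i j
    by (rule continuous_on_compose2[OF continuous_on_subset[OF A_cont J(2)] continuous_on_fst])
       (use that B0_V0 in auto)
  have cK: "continuous_on (J \<times> S) (\<lambda>z. snd z i)" for i
    by (rule continuous_on_compose2[OF continuous_on_product_coordinates continuous_on_snd]) auto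
  have "continuous_on (J \<times> S) (\<lambda>z. H (fst z) (snd z))" unfolding H_def
    by (intro continuous_on_sum continuous_on_rabs continuous_on_mult cK cA) auto
  then obtain z0 where z0: "z0 \<in> J \<times> S" "\<forall>y\<in>J \<times> S. H (fst z0) (snd z0) \<le> H (fst y) (snd y)"
    using continuous_attains_inf[OF cJS neJS] by blast
  define \<delta> where "\<delta> = H (fst z0) (snd z0)"
  have "fst z0 \<in> I" using z0 J(2) by auto
  moreover have "(\<Sum>b\<in>B0. \<bar>snd z0 b\<bar>) = 1" using z0 unfolding S_def by auto
  ultimately have dpos: "\<delta> > 0" unfolding \<delta>_def by (rule H_pos)
  have "\<delta> * (\<Sum>i\<in>B0. \<bar>a i\<bar>) \<le> H s a" if s: "s \<in> J" for s a
  proof (cases "(\<Sum>i\<in>B0. \<bar>a i\<bar>) = 0")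
    case True
    have "H s a \<ge> 0" unfolding H_def by (intro sum_nonneg) auto
    then show ?thesis using True by simp
  next
    case False
    define \<sigma> where "\<sigma> = (\<Sum>i\<in>B0. \<bar>a i\<bar>)"
    have "\<sigma> \<ge> 0" unfolding \<sigma>_def by (intro sum_nonneg) auto
    then have sp: "\<sigma> > 0" using False unfolding \<sigma>_def by linarith
    define \<kappa> where "\<kappa> = (\<lambda>b. if b \<in> B0 then a b / \<sigma> else 0)"
    have k1: "(\<Sum>b\<in>B0. \<bar>\<kappa> b\<bar>) = 1"
    proof -
      have "(\<Sum>b\<in>B0. \<bar>\<kappa> b\<bar>) = (\<Sum>b\<in>B0. \<bar>a b\<bar> / \<sigma>)" unfolding \<kappa>_def using sp
        by (intro sum.cong) auto
      also have "\<dots> = \<sigma> / \<sigma>" unfolding \<sigma>_def by (simp add: sum_divide_distrib[symmetric])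
      finally show ?thesis using sp by simp
    qed
    have kb: "\<kappa> b \<in> (if b \<in> B0 then {-1..1} else {0})" for b
    proof (cases "b \<in> B0")
      case b: True
      have "\<bar>a b\<bar> \<le> \<sigma>" unfolding \<sigma>_def by (rule member_le_sum) (use b B0_fin in auto)
      then have ab: "\<bar>a b / \<sigma>\<bar> \<le> 1" using sp by (simp add: abs_divide)
      have h1: "a b / \<sigma> \<le> 1" by (rule abs_le_D1[OF ab])
      have h2: "- (a b / \<sigma>) \<le> 1" by (rule abs_le_D2[OF ab])
      have "\<kappa> b = a b / \<sigma>" using b by (simp add: \<kappa>_def)
      then show ?thesis using h1 h2 b by simp
    next
      case False then show ?thesis by (simp add: \<kappa>_def)
    qed
    have "\<kappa> \<in> box" unfolding box_def PiE_UNIV_domain using kb by (simp add: Pi_iff)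
    then have "(s, \<kappa>) \<in> J \<times> S" using s k1 unfolding S_def by auto
    then have "\<delta> \<le> H s \<kappa>" using z0(2) unfolding \<delta>_def by auto
    moreover have "H s a = \<sigma> * H s \<kappa>" unfolding \<kappa>_def by (rule H_homog[OF \<sigma>_def[symmetric] sp])
    ultimately show ?thesis using sp unfolding \<sigma>_def[symmetric] by (simp add: mult.commute mult_left_mono)
  qed
  then show ?thesis using dpos by blast
qed

end


context S5 begin

lemma E_cont: "continuous_on I En"
  unfolding continuous_on_eq_continuous_within using E_deriv DERIV_continuous by blast

lemma main_T:
  assumes T: "T \<in> I" shows "q T x = c"
proof -
  define J where "J = {min 0 T..max 0 T}"
  have mi: "min 0 T \<in> I" "max 0 T \<in> I" using T zero_I by (auto simp: min_def max_def)
  have JI: "J \<subseteq> I" unfolding J_def using mem_is_interval_1_I[OF I_int mi] by auto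
  have cJ: "compact J" unfolding J_def by simp
  have neJ: "J \<noteq> {}" unfolding J_def by auto
  have TJ: "T \<in> J" and zJ: "0 \<in> J" unfolding J_def by auto
  obtain K1 where K1: "K1 \<ge> 0" "\<forall>s\<in>J. \<forall>i\<in>B0. \<forall>j\<in>B0. \<bar>G i j s\<bar> \<le> K1"
    using K1_ex[OF cJ JI neJ] by blast
  obtain \<delta> where dl: "\<delta> > 0" "\<forall>s\<in>J. \<forall>a. \<delta> * (\<Sum>i\<in>B0. \<bar>a i\<bar>) \<le> H s a"
    using delta_ex[OF cJ JI neJ] by blast
  define L where "L = 2 * K1 * card B0 / \<delta>"
  have L0: "L \<ge> 0" unfolding L_def using K1 dl by simp
  have bnd: "\<bar>Enp s\<bar> \<le> L * En s" if "s \<in> J" for s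
    unfolding L_def using bound_core(1)[of s \<delta> K1] that JI K1 dl by blast
  have zero: "En T = 0 \<Longrightarrow> r T x = 0"
    using bound_core(2)[of T \<delta> K1] TJ JI K1 dl by blast
  have cE: "continuous_on J En" using continuous_on_subset[OF E_cont JI] .
  have dE: "(En has_real_derivative Enp y) (at y)" if "min 0 T < y" "y < max 0 T" for y
  proof -
    have "{min 0 T<..<max 0 T} \<subseteq> interior I"
      by (rule interior_maximal) (use JI in \<open>auto simp: J_def\<close>)
    then have "y \<in> interior I" using that by auto
    then show ?thesis using E_deriv[of y] at_within_interior[of y I] interior_subset by auto
  qed
  have "En T = 0"
  proof (cases "0 \<le> T")
    case True
    define \<Phi> where "\<Phi> s = En s * exp (- L * s)" for s
    have "\<Phi> T \<le> \<Phi> 0"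
    proof (rule DERIV_nonpos_imp_decreasing_open[OF True])
      fix y assume y: "0 < y" "y < T"
      have d1: "((\<lambda>s. - L * s) has_real_derivative - L) (at y)"
        using DERIV_cmult[OF DERIV_ident, of "-L"] by simp
      have dy: "(En has_real_derivative Enp y) (at y)" by (rule dE) (use y True in auto)
      have "(\<Phi> has_real_derivative Enp y * exp (- L * y) + exp (- L * y) * (- L) * En y) (at y)"
        unfolding \<Phi>_def by (rule DERIV_mult[OF dy DERIV_fun_exp[OF d1]])
      moreover have "Enp y * exp (- L * y) + exp (- L * y) * (- L) * En y \<le> 0"
      proof -
        have "Enp y \<le> L * En y" using bnd[of y] y unfolding J_def by auto
        then have "(Enp y - L * En y) * exp (- L * y) \<le> 0" by (simp add: mult_nonpos_nonneg)
        then show ?thesis by (simp add: algebra_simps)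
      qed
      ultimately show "\<exists>d. (\<Phi> has_real_derivative d) (at y) \<and> d \<le> 0" by blast
    next
      show "continuous_on {0..T} \<Phi>" unfolding \<Phi>_def
        using cE True unfolding J_def by (intro continuous_intros) auto
    qed
    then have "En T * exp (- L * T) \<le> 0" unfolding \<Phi>_def using E0 by simp
    then show ?thesis using E_nonneg[of T] by (simp add: mult_le_0_iff)
  next
    case False
    then have F: "T \<le> 0" by simp
    define \<Phi> where "\<Phi> s = En s * exp (L * s)" for s
    have "\<Phi> T \<le> \<Phi> 0"
    proof (rule DERIV_nonneg_imp_increasing_open[OF F])
      fix y assume y: "T < y" "y < 0"
      have d1: "((\<lambda>s. L * s) has_real_derivative L) (at y)"
        using DERIV_cmult[OF DERIV_ident, of "L"] by simp
      have dy: "(En has_real_derivative Enp y) (at y)" by (rule dE) (use y F in auto)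
      have "(\<Phi> has_real_derivative Enp y * exp (L * y) + exp (L * y) * L * En y) (at y)"
        unfolding \<Phi>_def by (rule DERIV_mult[OF dy DERIV_fun_exp[OF d1]])
      moreover have "Enp y * exp (L * y) + exp (L * y) * L * En y \<ge> 0"
      proof -
        have "- Enp y \<le> L * En y" using bnd[of y] y unfolding J_def by auto
        then have "(Enp y + L * En y) * exp (L * y) \<ge> 0" by simp
        then show ?thesis by (simp add: algebra_simps)
      qed
      ultimately show "\<exists>d. (\<Phi> has_real_derivative d) (at y) \<and> 0 \<le> d" by blast
    next
      show "continuous_on {T..0} \<Phi>" unfolding \<Phi>_def
        using cE F unfolding J_def by (intro continuous_intros) auto
    qed
    then have "En T * exp (L * T) \<le> 0" unfolding \<Phi>_def using E0 by simp
    then show ?thesis using E_nonneg[of T] by (simp add: mult_le_0_iff)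
  qed
  then have "r T x = 0" by (rule zero)
  then show ?thesis unfolding r_def by simp
qed

end

theorem mainTheorem5:
  fixes M :: "'p::topological_space measure"
    and khat :: "'p \<Rightarrow> real^3" and E :: "'p set set"
    and grad :: "('p \<Rightarrow> real) \<Rightarrow> ('p \<Rightarrow> real^3)" and sdiv :: "('p \<Rightarrow> real^3) \<Rightarrow> ('p \<Rightarrow> real)"
    and V0 :: "('p \<Rightarrow> real) set" and V1 :: "('p \<Rightarrow> real^3) set" and V2 :: "('p \<Rightarrow> real) set"
    and g :: real and f b :: "'p \<Rightarrow> real" and I :: "real set"
    and u F :: "real \<Rightarrow> 'p \<Rightarrow> real^3" and D \<zeta> q :: "real \<Rightarrow> 'p \<Rightarrow> real" and c :: real
  assumes setting: "primal_setting M khat E grad sdiv V0 V1 V2"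
    and g_pos: "g > 0"
    and f_Linf: "bdd_meas M f"
    and b_V2: "b \<in> V2"
    and I_int: "is_interval I" and zero_I: "0 \<in> I"
    and u_V1: "\<forall>t\<in>I. u t \<in> V1" and D_V2: "\<forall>t\<in>I. D t \<in> V2"
    and u_C1: "weak_C1 M I V1 u" and D_C1: "weak_C1 M I V2 D"
    and F_V1: "\<forall>t\<in>I. F t \<in> V1" and F_cont: "weak_cont M I V1 F"
    and D_pos: "\<forall>t\<in>I. \<forall>x. D t x > 0"
    and vort: "\<forall>t\<in>I. \<zeta> t \<in> V0 \<and>
        (\<forall>\<gamma>\<in>V0. (LINT x|M. \<gamma> x * \<zeta> t x) = - (LINT x|M. perp khat (grad \<gamma>) x \<bullet> u t x))"
    and pv: "\<forall>t\<in>I. q t \<in> V0 \<and>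
        (\<forall>\<gamma>\<in>V0. (LINT x|M. \<gamma> x * q t x * D t x) = (LINT x|M. \<gamma> x * (\<zeta> t x + f x)))"
    and mom: "\<forall>t\<in>I. \<forall>w\<in>V1.
        ((\<lambda>s. LINT x|M. w x \<bullet> u s x) has_real_derivative
          (- (LINT x|M. w x \<bullet> perp khat (\<lambda>y. q t y *\<^sub>R F t y) x)
           + (LINT x|M. sdiv w x * (g * (D t x + b x) + (1/2) * (norm (u t x))\<^sup>2)))) (at t within I)"
    and cont: "\<forall>t\<in>I. \<forall>\<phi>\<in>V2.
        ((\<lambda>s. LINT x|M. \<phi> x * D s x) has_real_derivative
          (- (LINT x|M. \<phi> x * sdiv (F t) x))) (at t within I)"
    and q0: "\<forall>x. q 0 x = c"
  shows "\<forall>t\<in>I. \<forall>x. q t x = c"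
proof -
  interpret S5 M khat E grad sdiv V0 V1 V2 g f b I u F D \<zeta> q c
    using assms by (rule S5.intro)
  show ?thesis using main_T by blast
qed

end
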